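(* Let $\mathcal X=\{X_1,\dots,X_n\}$ be a multi-set of real symmetric $2\times2$ matrices and $S=\lim_{m\to\infty}\frac1m\log\sum_{i=1}^n\exp(mX_i)$ its log-exp-supremum. Then $S$ is an upper bound of $\mathcal X$ in the Loewner order, i.e. $X_j\le_{\mathrm L}S$ for all $j\in\{1,\dots,n\}$.
   Context: For real symmetric matrices $A,B$, $A\le_{\mathrm L}B$ (Loewner order) means that $B-A$ is positive semidefinite. $\exp$ and $\log$ denote the matrix exponential and matrix logarithm. *)

theory Defs
  imports "HOL-Analysis.Analysis"
begin

type_synonym mat2 = "real^2^2"

primrec mpow :: "real^'n^'n \<Rightarrow> nat \<Rightarrow> real^'n^'n" where
  "mpow A 0 = mat 1"
| "mpow A (Suc k) = A ** mpow A k"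

definition sym_mat :: "real^'n^'n \<Rightarrow> bool" where
  "sym_mat A \<longleftrightarrow> transpose A = A"

definition mexp :: "real^'n^'n \<Rightarrow> real^'n^'n" where
  "mexp A = (\<Sum>k. (1 / fact k) *\<^sub>R mpow A k)"

definition mlog :: "real^'n^'n \<Rightarrow> real^'n^'n" where
  "mlog M = (THE L. sym_mat L \<and> mexp L = M)"

definition psd :: "real^'n^'n \<Rightarrow> bool" where
  "psd A \<longleftrightarrow> sym_mat A \<and> (\<forall>v. v \<bullet> (A *v v) \<ge> 0)"

definition loewner_le :: "real^'n^'n \<Rightarrow> real^'n^'n \<Rightarrow> bool" where
  "loewner_le A B \<longleftrightarrow> psd (B - A)"

end

theory Submission
  imports Defs "HOL-Real_Asymp.Real_Asymp"
begin

lemma madd_rdistrib: "((A::real^'n^'n) + B) ** C = A ** C + B ** C"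
  by (vector matrix_matrix_mult_def sum.distrib distrib_right)

lemma transpose_add': "transpose ((A::real^'n^'n) + B) = transpose A + transpose B"
  by (simp add: transpose_def vec_eq_iff)

lemma sym_add: "sym_mat A \<Longrightarrow> sym_mat B \<Longrightarrow> sym_mat (A + B)"
  by (simp add: sym_mat_def transpose_add')

lemma sym_scale: "sym_mat A \<Longrightarrow> sym_mat (c *\<^sub>R A)"
  by (simp add: sym_mat_def transpose_scalar)

lemma sym_sum: "(\<And>i. i \<in> I \<Longrightarrow> sym_mat (f i)) \<Longrightarrow> sym_mat (sum f I)"
  by (induction I rule: infinite_finite_induct)
     (auto simp: transpose_add' sym_mat_def transpose_def vec_eq_iff)

definition spec :: "real^2^2 \<Rightarrow> real \<Rightarrow> real \<Rightarrow> real^2^2 \<Rightarrow> real^2^2 \<Rightarrow> bool" where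
  "spec A a b P Q \<longleftrightarrow> sym_mat P \<and> sym_mat Q \<and> P ** P = P \<and> Q ** Q = Q \<and> P ** Q = 0
     \<and> Q ** P = 0 \<and> P + Q = mat 1 \<and> A = a *\<^sub>R P + b *\<^sub>R Q"

lemma spec_mult:
  assumes "spec A a b P Q"
  shows "(c *\<^sub>R P + d *\<^sub>R Q) ** (e *\<^sub>R P + f *\<^sub>R Q) = (c*e) *\<^sub>R P + (d*f) *\<^sub>R Q"
  using assms unfolding spec_def
  by (simp add: madd_rdistrib matrix_add_ldistrib matrix_scalar_ac scalar_matrix_assoc[symmetric] mult.commute)

lemma spec_sym: "spec A a b P Q \<Longrightarrow> sym_mat A"
  unfolding spec_def by (simp add: sym_add sym_scale)

lemma spec_scale: "spec A a b P Q \<Longrightarrow> spec (c *\<^sub>R A) (c*a) (c*b) P Q"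
  unfolding spec_def by (simp add: scaleR_add_right)

lemma mpow_spec: "spec A a b P Q \<Longrightarrow> mpow A k = (a^k) *\<^sub>R P + (b^k) *\<^sub>R Q"
proof (induction k)
  case 0 then show ?case by (simp add: spec_def)
next
  case (Suc k)
  then have "A = a *\<^sub>R P + b *\<^sub>R Q" by (simp add: spec_def)
  then show ?case using Suc spec_mult[OF Suc.prems] by simp
qed

lemma mexp_spec:
  assumes "spec A a b P Q"
  shows "mexp A = exp a *\<^sub>R P + exp b *\<^sub>R Q"
proof -
  have "(\<lambda>k. (1 / fact k) *\<^sub>R mpow A k) = (\<lambda>k. (a^k /\<^sub>R fact k) *\<^sub>R P + (b^k /\<^sub>R fact k) *\<^sub>R Q)"
    using mpow_spec[OF assms] by (auto simp: scaleR_add_right divide_inverse_commute)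
  moreover have "(\<lambda>k. (a^k /\<^sub>R fact k) *\<^sub>R P + (b^k /\<^sub>R fact k) *\<^sub>R Q) sums (exp a *\<^sub>R P + exp b *\<^sub>R Q)"
    by (intro sums_add sums_scaleR_left exp_converges)
  ultimately show ?thesis unfolding mexp_def by (simp add: sums_iff)
qed

lemma spec_exp: "spec A a b P Q \<Longrightarrow> spec (mexp A) (exp a) (exp b) P Q"
  using mexp_spec[of A a b P Q] by (simp add: spec_def)

definition PP :: "real \<Rightarrow> real \<Rightarrow> real^2^2" where
  "PP s t = (\<chi> i j. if i = 1 then (if j = 1 then (1+s)/2 else t/2) else (if j = 1 then t/2 else (1-s)/2))"

lemma PP_nth: "PP s t $ 1 $ 1 = (1+s)/2" "PP s t $ 1 $ 2 = t/2" "PP s t $ 2 $ 1 = t/2" "PP s t $ 2 $ 2 = (1-s)/2"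
  by (simp_all add: PP_def)

lemma mat2_eq: "(A::real^2^2) = B \<longleftrightarrow> A$1$1 = B$1$1 \<and> A$1$2 = B$1$2 \<and> A$2$1 = B$2$1 \<and> A$2$2 = B$2$2"
  by (auto simp: vec_eq_iff forall_2)

lemma mmult_nth: "((A::real^2^2) ** B) $ i $ j = A$i$1 * B$1$j + A$i$2 * B$2$j"
  by (simp add: matrix_matrix_mult_def sum_2)
lemma mat1_nth: "(mat 1::real^2^2)$1$1 = 1" "(mat 1::real^2^2)$1$2 = 0" "(mat 1::real^2^2)$2$1 = 0" "(mat 1::real^2^2)$2$2 = 1"
  by (simp_all add: mat_def)
lemma tr_nth: "transpose A $ i $ j = A $ j $ i" by (simp add: transpose_def)

lemma spec_PP:
  assumes "s^2 + t^2 = 1"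
  shows "spec (l1 *\<^sub>R PP s t + l2 *\<^sub>R PP (-s) (-t)) l1 l2 (PP s t) (PP (-s) (-t))"
proof -
  have t2: "t * t = 1 - s * s" using assms by (simp add: power2_eq_square)
  have a: "sym_mat (PP s t)" "sym_mat (PP (-s) (-t))"
    by (simp_all add: sym_mat_def mat2_eq tr_nth PP_nth)
  have b: "PP s t ** PP s t = PP s t"
    by (simp add: mat2_eq mmult_nth PP_nth; simp add: field_simps t2)
  have c: "PP (-s) (-t) ** PP (-s) (-t) = PP (-s) (-t)"
    by (simp add: mat2_eq mmult_nth PP_nth; simp add: field_simps t2)
  have d: "PP s t ** PP (-s) (-t) = 0" "PP (-s) (-t) ** PP s t = 0"
    by (simp_all add: mat2_eq mmult_nth PP_nth; simp add: field_simps t2)+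
  have e: "PP s t + PP (-s) (-t) = mat 1"
    by (simp add: mat2_eq PP_nth mat1_nth field_simps)
  show ?thesis using a b c d e by (simp add: spec_def)
qed
lemma spec_P: "spec M a b P Q \<Longrightarrow> M ** P = a *\<^sub>R P"
proof -
  assume s: "spec M a b P Q"
  have "M ** (1 *\<^sub>R P + 0 *\<^sub>R Q) = (a*1) *\<^sub>R P + (b*0) *\<^sub>R Q"
    using spec_mult[OF s, of a b 1 0] s by (simp add: spec_def)
  then show ?thesis by simp
qed

lemma spec_Q: "spec M a b P Q \<Longrightarrow> M ** Q = b *\<^sub>R Q"
proof -
  assume s: "spec M a b P Q"
  have "M ** (0 *\<^sub>R P + 1 *\<^sub>R Q) = (a*0) *\<^sub>R P + (b*1) *\<^sub>R Q"
    using spec_mult[OF s, of a b 0 1] s by (simp add: spec_def)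
  then show ?thesis by simp
qed

lemma spec_P': "spec M a b P Q \<Longrightarrow> P ** M = a *\<^sub>R P"
proof -
  assume s: "spec M a b P Q"
  have "(1 *\<^sub>R P + 0 *\<^sub>R Q) ** M = (1*a) *\<^sub>R P + (0*b) *\<^sub>R Q"
    using spec_mult[OF s, of 1 0 a b] s by (simp add: spec_def)
  then show ?thesis by simp
qed

lemma spec_Q': "spec M a b P Q \<Longrightarrow> Q ** M = b *\<^sub>R Q"
proof -
  assume s: "spec M a b P Q"
  have "(0 *\<^sub>R P + 1 *\<^sub>R Q) ** M = (0*a) *\<^sub>R P + (1*b) *\<^sub>R Q"
    using spec_mult[OF s, of 0 1 a b] s by (simp add: spec_def)
  then show ?thesis by simp
qed

lemma cross_eq:
  fixes R M P :: "real^2^2"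
  assumes "R ** M = a' *\<^sub>R R" "M ** P = a *\<^sub>R P"
  shows "f a *\<^sub>R (R ** P) = f a' *\<^sub>R (R ** P)"
proof -
  have "(R ** M) ** P = a' *\<^sub>R (R ** P)" using assms(1) scalar_matrix_assoc[of a' R P] by simp
  moreover have "(R ** M) ** P = a *\<^sub>R (R ** P)"
  proof -
    have "(R ** M) ** P = R ** (M ** P)" by (simp add: matrix_mul_assoc)
    also have "\<dots> = R ** (a *\<^sub>R P)" using assms(2) by simp
    also have "\<dots> = a *\<^sub>R (R ** P)" by (simp add: matrix_scalar_ac scalar_matrix_assoc)
    finally show ?thesis .
  qed
  ultimately have "(a - a') *\<^sub>R (R ** P) = 0" by (simp add: scaleR_diff_left)
  then have "a = a' \<or> R ** P = 0" by simp
  then show ?thesis by auto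
qed

lemma spec_fun_unique:
  assumes s: "spec M a b P Q" and s': "spec M a' b' P' Q'"
  shows "f a *\<^sub>R P + f b *\<^sub>R Q = f a' *\<^sub>R P' + f b' *\<^sub>R Q'"
proof -
  have 1: "f a *\<^sub>R (P' ** P) = f a' *\<^sub>R (P' ** P)" by (rule cross_eq[OF spec_P'[OF s'] spec_P[OF s]])
  have 2: "f b *\<^sub>R (P' ** Q) = f a' *\<^sub>R (P' ** Q)" by (rule cross_eq[OF spec_P'[OF s'] spec_Q[OF s]])
  have 3: "f a *\<^sub>R (Q' ** P) = f b' *\<^sub>R (Q' ** P)" by (rule cross_eq[OF spec_Q'[OF s'] spec_P[OF s]])
  have 4: "f b *\<^sub>R (Q' ** Q) = f b' *\<^sub>R (Q' ** Q)" by (rule cross_eq[OF spec_Q'[OF s'] spec_Q[OF s]])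
  have "f a *\<^sub>R P + f b *\<^sub>R Q = (P' + Q') ** (f a *\<^sub>R P + f b *\<^sub>R Q)"
  proof -
    have "P' + Q' = mat 1" using s' by (simp add: spec_def)
    then show ?thesis by simp
  qed
  also have "\<dots> = f a *\<^sub>R (P' ** P) + f b *\<^sub>R (P' ** Q) + f a *\<^sub>R (Q' ** P) + f b *\<^sub>R (Q' ** Q)"
    by (simp add: madd_rdistrib matrix_add_ldistrib matrix_scalar_ac scalar_matrix_assoc[symmetric] scaleR_add_right add_ac)
  also have "\<dots> = f a' *\<^sub>R (P' ** P) + f a' *\<^sub>R (P' ** Q) + f b' *\<^sub>R (Q' ** P) + f b' *\<^sub>R (Q' ** Q)"
    by (simp only: 1 2 3 4)
  also have "\<dots> = (f a' *\<^sub>R P' + f b' *\<^sub>R Q') ** (P + Q)"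
    by (simp add: madd_rdistrib matrix_add_ldistrib scalar_matrix_assoc[symmetric])
  also have "\<dots> = f a' *\<^sub>R P' + f b' *\<^sub>R Q'"
  proof -
    have "P + Q = mat 1" using s by (simp add: spec_def)
    then show ?thesis by simp
  qed
  finally show ?thesis .
qed

lemma spec_exists:
  assumes "sym_mat A"
  shows "\<exists>a b P Q. spec A a b P Q"
proof -
  define a where "a = A$1$1"
  define b where "b = A$1$2"
  define c where "c = A$2$2"
  have b2: "A$2$1 = b"
  proof -
    have "transpose A $ 1 $ 2 = A $ 1 $ 2" using assms unfolding sym_mat_def by simp
    then show ?thesis by (simp add: tr_nth b_def)
  qed
  define d where "d = sqrt (((a-c)/2)^2 + b^2)"
  show ?thesis
  proof (cases "d = 0")
    case True
    then have "((a-c)/2)^2 + b^2 = 0" unfolding d_def by simp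
    then have "a = c" "b = 0" by (auto simp: power2_eq_square add_nonneg_eq_0_iff)
    then have "A = a *\<^sub>R PP 1 0 + c *\<^sub>R PP (-1) (-0)"
      using b2 by (simp add: mat2_eq PP_nth a_def b_def c_def)
    then show ?thesis using spec_PP[of 1 0 a c] by auto
  next
    case False
    have "d \<ge> 0" unfolding d_def by simp
    with False have dpos: "d > 0" by simp
    have dd: "d^2 = ((a-c)/2)^2 + b^2" unfolding d_def by simp
    define s where "s = (a-c)/(2*d)"
    define t where "t = b/d"
    have st: "s^2 + t^2 = 1" using dd dpos unfolding s_def t_def
      by (simp add: field_simps power2_eq_square)
    have e1: "((a+c)/2 + d) * ((1+s)/2) + ((a+c)/2 - d) * ((1-s)/2) = a"
      using dpos unfolding s_def by (simp add: field_simps)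
    have e2: "((a+c)/2 + d) * ((1-s)/2) + ((a+c)/2 - d) * ((1+s)/2) = c"
      using dpos unfolding s_def by (simp add: field_simps)
    have e3: "((a+c)/2 + d) * (t/2) + ((a+c)/2 - d) * (-t/2) = b"
      using dpos unfolding t_def by (simp add: field_simps)
    have "A = ((a+c)/2 + d) *\<^sub>R PP s t + ((a+c)/2 - d) *\<^sub>R PP (-s) (-t)"
      unfolding mat2_eq using b2 e1 e2 e3 by (simp add: PP_nth a_def b_def c_def)
    then show ?thesis using spec_PP[OF st] by metis
  qed
qed

lemma ln_ratio_lim:
  fixes p :: real assumes "p > 0"
  shows "((\<lambda>T. ln (p + T) - ln (1 + T)) \<longlongrightarrow> 0) at_top"
  using assms by real_asymp

lemma scalar_key:
  fixes p1 p2 q1 q2 e1 e2 f1 f2 :: real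
  assumes pos: "p1 > 0" "p2 > 0" "q1 > 0" "q2 > 0"
    and sum: "e1 + e2 = f1 + f2"
    and res: "\<And>t. t \<ge> 0 \<Longrightarrow> e1/(p1+t) + e2/(p2+t) \<le> f1/(q1+t) + f2/(q2+t)"
  shows "f1 * ln q1 + f2 * ln q2 \<le> e1 * ln p1 + e2 * ln p2"
proof -
  define G where "G T = e1 * ln (p1+T) + e2 * ln (p2+T) - f1 * ln (q1+T) - f2 * ln (q2+T)" for T
  have dec: "G T \<le> G 0" if "T \<ge> 0" for T
  proof (rule DERIV_nonpos_imp_nonincreasing[OF that])
    fix x :: real assume x: "0 \<le> x" "x \<le> T"
    have "DERIV G x :> (e1 * inverse (p1+x) + e2 * inverse (p2+x) - f1 * inverse (q1+x) - f2 * inverse (q2+x))"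
      unfolding G_def using pos x by (auto intro!: derivative_eq_intros simp: divide_inverse)
    moreover have "e1 * inverse (p1+x) + e2 * inverse (p2+x) - f1 * inverse (q1+x) - f2 * inverse (q2+x) \<le> 0"
      using res[OF x(1)] by (simp add: divide_inverse)
    ultimately show "\<exists>y. DERIV G x :> y \<and> y \<le> 0" by blast
  qed
  have eqG: "G T = e1 * (ln (p1+T) - ln (1+T)) + e2 * (ln (p2+T) - ln (1+T))
      - f1 * (ln (q1+T) - ln (1+T)) - f2 * (ln (q2+T) - ln (1+T))" for T
  proof -
    have "(e1 + e2) * ln (1+T) = (f1 + f2) * ln (1+T)" using sum by simp
    then show ?thesis unfolding G_def by (simp add: algebra_simps)
  qed
  have lim: "(G \<longlongrightarrow> 0) at_top"
  proof -
    have "((\<lambda>T. e1 * (ln (p1+T) - ln (1+T)) + e2 * (ln (p2+T) - ln (1+T))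
      - f1 * (ln (q1+T) - ln (1+T)) - f2 * (ln (q2+T) - ln (1+T))) \<longlongrightarrow>
       e1 * 0 + e2 * 0 - f1 * 0 - f2 * 0) at_top"
      using pos by (intro tendsto_intros ln_ratio_lim)
    moreover have "G = (\<lambda>T. e1 * (ln (p1+T) - ln (1+T)) + e2 * (ln (p2+T) - ln (1+T))
      - f1 * (ln (q1+T) - ln (1+T)) - f2 * (ln (q2+T) - ln (1+T)))" using eqG by (simp add: fun_eq_iff)
    ultimately show ?thesis by simp
  qed
  have ev: "eventually (\<lambda>T. G T \<le> G 0) at_top"
    using eventually_ge_at_top[of "0::real"] by (rule eventually_mono) (rule dec)
  have "0 \<le> G 0"
    by (rule tendsto_le[OF trivial_limit_at_top_linorder tendsto_const lim ev])
  then show ?thesis unfolding G_def by simp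
qed

definition qf :: "real^2^2 \<Rightarrow> real^2 \<Rightarrow> real" where
  "qf A v = v \<bullet> (A *v v)"

lemma inner_sym: "sym_mat A \<Longrightarrow> x \<bullet> (A *v y) = (A *v x) \<bullet> y"
  by (metis dot_lmul_matrix sym_mat_def transpose_matrix_vector)

lemma qf_lin: "qf (a *\<^sub>R P + b *\<^sub>R Q) v = a * qf P v + b * qf Q v"
  unfolding qf_def
  by (simp add: matrix_vector_mult_add_rdistrib scaleR_matrix_vector_assoc[symmetric] inner_add_right)

lemma qf_add: "qf (P + Q) v = qf P v + qf Q v"
  unfolding qf_def by (simp add: matrix_vector_mult_add_rdistrib inner_add_right)

lemma qf_proj: "sym_mat P \<Longrightarrow> P ** P = P \<Longrightarrow> qf P v = (P *v v) \<bullet> (P *v v)"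
  unfolding qf_def by (metis inner_sym matrix_vector_mul_assoc)

lemma spec_qf:
  assumes "spec A a b P Q"
  shows "qf A v = a * qf P v + b * qf Q v" "qf P v \<ge> 0" "qf Q v \<ge> 0" "qf P v + qf Q v = v \<bullet> v"
proof -
  show "qf A v = a * qf P v + b * qf Q v" using assms qf_lin by (simp add: spec_def)
  show "qf P v \<ge> 0" "qf Q v \<ge> 0" using assms qf_proj by (auto simp: spec_def)
  have "qf P v + qf Q v = qf (P + Q) v" by (simp add: qf_add)
  also have "\<dots> = v \<bullet> v" using assms by (simp add: spec_def qf_def)
  finally show "qf P v + qf Q v = v \<bullet> v" .
qed

lemma spec_comb: "spec M a b P Q \<Longrightarrow> spec (c *\<^sub>R P + d *\<^sub>R Q) c d P Q"
  by (simp add: spec_def)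

lemma mlog_spec:
  assumes s: "spec M a b P Q" and pos: "a > 0" "b > 0"
  shows "mlog M = ln a *\<^sub>R P + ln b *\<^sub>R Q"
  unfolding mlog_def
proof (rule the_equality)
  have s2: "spec (ln a *\<^sub>R P + ln b *\<^sub>R Q) (ln a) (ln b) P Q" by (rule spec_comb[OF s])
  show "sym_mat (ln a *\<^sub>R P + ln b *\<^sub>R Q) \<and> mexp (ln a *\<^sub>R P + ln b *\<^sub>R Q) = M"
    using spec_sym[OF s2] mexp_spec[OF s2] s pos by (simp add: spec_def)
next
  fix L assume L: "sym_mat L \<and> mexp L = M"
  then obtain a' b' P' Q' where sL: "spec L a' b' P' Q'" using spec_exists by blast
  have "spec M (exp a') (exp b') P' Q'" using spec_exp[OF sL] L by simp
  from spec_fun_unique[OF s this, of ln]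
  have "ln a *\<^sub>R P + ln b *\<^sub>R Q = a' *\<^sub>R P' + b' *\<^sub>R Q'" by simp
  also have "\<dots> = L" using sL by (simp add: spec_def)
  finally show "L = ln a *\<^sub>R P + ln b *\<^sub>R Q" by simp
qed

lemma nonzero_mat_vec: "(P::real^2^2) \<noteq> 0 \<Longrightarrow> \<exists>x. P *v x \<noteq> 0"
  using matrix_eq[of P 0] by auto

lemma eig_pos:
  fixes M P :: "real^2^2"
  assumes MP: "M ** P = a *\<^sub>R P" and P: "P \<noteq> 0"
    and pd: "\<And>v. v \<noteq> 0 \<Longrightarrow> qf M v > 0"
  shows "a > 0"
proof -
  obtain x where x: "P *v x \<noteq> 0" using nonzero_mat_vec[OF P] by blast
  define w where "w = P *v x"
  have "M *v w = a *\<^sub>R w" unfolding w_def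
    by (simp add: matrix_vector_mul_assoc MP scaleR_matrix_vector_assoc)
  then have "qf M w = a * (w \<bullet> w)" by (simp add: qf_def)
  moreover have "qf M w > 0" "w \<bullet> w > 0" using pd x w_def by auto
  ultimately show ?thesis by (simp add: zero_less_mult_iff)
qed

lemma spec_pos:
  assumes s: "spec M a b P Q" and pd: "\<And>v. v \<noteq> 0 \<Longrightarrow> qf M v > 0"
  shows "\<exists>a' b'. a' > 0 \<and> b' > 0 \<and> spec M a' b' P Q"
proof -
  define a' where "a' = (if P = 0 then 1 else a)"
  define b' where "b' = (if Q = 0 then 1 else b)"
  have "a' > 0" using eig_pos[OF spec_P[OF s] _ pd] by (simp add: a'_def)
  moreover have "b' > 0" using eig_pos[OF spec_Q[OF s] _ pd] by (simp add: b'_def)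
  moreover have "M = a' *\<^sub>R P + b' *\<^sub>R Q" using s by (simp add: spec_def a'_def b'_def)
  then have "spec M a' b' P Q" using s by (simp add: spec_def)
  ultimately show ?thesis by blast
qed

lemma resolvent_mono:
  assumes sP: "spec P p1 p2 E1 E2" and sQ: "spec Q q1 q2 F1 F2"
    and pos: "p1 + t > 0" "p2 + t > 0" "q1 + t > 0" "q2 + t > 0"
    and le: "\<And>x. qf Q x \<le> qf P x"
  shows "qf E1 v / (p1+t) + qf E2 v / (p2+t) \<le> qf F1 v / (q1+t) + qf F2 v / (q2+t)"
proof -
  define RP where "RP = (1/(p1+t)) *\<^sub>R E1 + (1/(p2+t)) *\<^sub>R E2"
  define RQ where "RQ = (1/(q1+t)) *\<^sub>R F1 + (1/(q2+t)) *\<^sub>R F2"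
  define Pt where "Pt = (p1+t) *\<^sub>R E1 + (p2+t) *\<^sub>R E2"
  define Qt where "Qt = (q1+t) *\<^sub>R F1 + (q2+t) *\<^sub>R F2"
  have sPt: "spec Pt (p1+t) (p2+t) E1 E2" unfolding Pt_def by (rule spec_comb[OF sP])
  have sQt: "spec Qt (q1+t) (q2+t) F1 F2" unfolding Qt_def by (rule spec_comb[OF sQ])
  have PR: "Pt ** RP = mat 1"
    unfolding Pt_def RP_def using spec_mult[OF sP] pos sP by (simp add: spec_def)
  have QR: "Qt ** RQ = mat 1"
    unfolding Qt_def RQ_def using spec_mult[OF sQ] pos sQ by (simp add: spec_def)
  have qRP: "qf RP v = qf E1 v / (p1+t) + qf E2 v / (p2+t)"
    unfolding RP_def qf_lin by simp
  have qRQ: "qf RQ v = qf F1 v / (q1+t) + qf F2 v / (q2+t)"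
    unfolding RQ_def qf_lin by simp
  have qPt: "qf Pt x = qf P x + t * (x \<bullet> x)" for x
  proof -
    have eq: "qf E1 x + qf E2 x = x \<bullet> x" by (rule spec_qf(4)[OF sP])
    show ?thesis using spec_qf(1)[OF sPt, of x] spec_qf(1)[OF sP, of x]
      by (simp add: algebra_simps flip: eq)
  qed
  have qQt: "qf Qt x = qf Q x + t * (x \<bullet> x)" for x
  proof -
    have eq: "qf F1 x + qf F2 x = x \<bullet> x" by (rule spec_qf(4)[OF sQ])
    show ?thesis using spec_qf(1)[OF sQt, of x] spec_qf(1)[OF sQ, of x]
      by (simp add: algebra_simps flip: eq)
  qed
  have Qtpsd: "qf Qt x \<ge> 0" for x
    using spec_qf[OF sQt, of x] pos by simp
  have symQt: "sym_mat Qt" by (rule spec_sym[OF sQt])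
  have symRP: "sym_mat RP" using spec_sym[OF spec_comb[OF sP]] unfolding RP_def .
  have symRQ: "sym_mat RQ" using spec_sym[OF spec_comb[OF sQ]] unfolding RQ_def .
  define u where "u = RP *v v"
  define w where "w = RQ *v v"
  have Qtw: "Qt *v w = v" unfolding w_def by (simp add: matrix_vector_mul_assoc QR)
  have Ptu: "Pt *v u = v" unfolding u_def by (simp add: matrix_vector_mul_assoc PR)
  have "0 \<le> qf Qt (u - w)" by (rule Qtpsd)
  also have "qf Qt (u - w) = qf Qt u - 2 * (u \<bullet> v) + w \<bullet> v"
  proof -
    have "qf Qt (u - w) = u \<bullet> (Qt *v u) - u \<bullet> (Qt *v w) - w \<bullet> (Qt *v u) + w \<bullet> (Qt *v w)"
      unfolding qf_def by (simp add: matrix_vector_mult_diff_distrib inner_diff_left inner_diff_right)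
    also have "w \<bullet> (Qt *v u) = u \<bullet> v" using inner_sym[OF symQt, of w u] Qtw by (simp add: inner_commute)
    finally show ?thesis using Qtw by (simp add: qf_def)
  qed
  also have "qf Qt u \<le> qf Pt u" using qPt qQt le by simp
  also have "qf Pt u = u \<bullet> v" using Ptu by (simp add: qf_def)
  finally have "0 \<le> w \<bullet> v - u \<bullet> v" by simp
  moreover have "u \<bullet> v = qf RP v" unfolding u_def qf_def by (simp add: inner_commute)
  moreover have "w \<bullet> v = qf RQ v" unfolding w_def qf_def by (simp add: inner_commute)
  ultimately show ?thesis using qRP qRQ by simp
qed

lemma log_mono:
  assumes sP: "spec P p1 p2 E1 E2" and sQ: "spec Q q1 q2 F1 F2"
    and pos: "p1 > 0" "p2 > 0" "q1 > 0" "q2 > 0"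
    and le: "\<And>x. qf Q x \<le> qf P x"
  shows "qf (ln q1 *\<^sub>R F1 + ln q2 *\<^sub>R F2) v \<le> qf (ln p1 *\<^sub>R E1 + ln p2 *\<^sub>R E2) v"
proof -
  have "qf F1 v * ln q1 + qf F2 v * ln q2 \<le> qf E1 v * ln p1 + qf E2 v * ln p2"
  proof (rule scalar_key[OF pos])
    show "qf E1 v + qf E2 v = qf F1 v + qf F2 v" using spec_qf(4)[OF sP] spec_qf(4)[OF sQ] by simp
    fix t :: real assume "t \<ge> 0"
    then show "qf E1 v / (p1+t) + qf E2 v / (p2+t) \<le> qf F1 v / (q1+t) + qf F2 v / (q2+t)"
      using pos by (intro resolvent_mono[OF sP sQ _ _ _ _ le]) auto
  qed
  then show ?thesis by (simp add: qf_lin mult.commute)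
qed

lemma mexp_pd:
  assumes "sym_mat A"
  shows "sym_mat (mexp A)" "v \<noteq> 0 \<Longrightarrow> qf (mexp A) v > 0"
proof -
  obtain a b P Q where s: "spec A a b P Q" using spec_exists[OF assms] by blast
  have se: "spec (mexp A) (exp a) (exp b) P Q" by (rule spec_exp[OF s])
  show "sym_mat (mexp A)" by (rule spec_sym[OF se])
  assume v: "v \<noteq> 0"
  have q: "qf (mexp A) v = exp a * qf P v + exp b * qf Q v" by (rule spec_qf(1)[OF se])
  have "qf P v + qf Q v > 0" using spec_qf(4)[OF se, of v] v by simp
  then have "qf P v > 0 \<or> qf Q v > 0" by linarith
  then show "qf (mexp A) v > 0" using q spec_qf(2,3)[OF se, of v]
    by (auto intro: add_pos_nonneg add_nonneg_pos)
qed

lemma mexp_psd: "sym_mat A \<Longrightarrow> qf (mexp A) v \<ge> 0"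
  by (cases "v = 0") (auto simp: qf_def intro: less_imp_le mexp_pd(2)[unfolded qf_def])

lemma qf_zero: "qf 0 v = 0" by (simp add: qf_def)

lemma qf_sum: "qf (sum f I) v = (\<Sum>i\<in>I. qf (f i) v)"
  by (induction I rule: infinite_finite_induct) (auto simp: qf_zero qf_add)

lemma qf_scale: "qf (c *\<^sub>R A) v = c * qf A v"
  using qf_lin[of c A 0 A v] by simp

lemma qf_expand: "qf A v = v$1 * (A$1$1 * v$1 + A$1$2 * v$2) + v$2 * (A$2$1 * v$1 + A$2$2 * v$2)"
  by (simp add: qf_def inner_vec_def sum_2 matrix_vector_mult_def)

lemma sym_diff: "sym_mat (A::real^2^2) \<Longrightarrow> sym_mat B \<Longrightarrow> sym_mat (A - B)"
  unfolding sym_mat_def by (simp add: transpose_def vec_eq_iff)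

theorem lemma6:
  fixes X :: "nat \<Rightarrow> real^2^2" and n :: nat and S :: "real^2^2"
  assumes sym: "\<And>i. i \<in> {1..n} \<Longrightarrow> sym_mat (X i)"
    and lim: "(\<lambda>m::nat. (1 / real m) *\<^sub>R mlog (\<Sum>i=1..n. mexp (real m *\<^sub>R X i)))
              \<longlonglongrightarrow> S"
  shows "\<forall>j\<in>{1..n}. loewner_le (X j) S"
proof
  fix j assume j: "j \<in> {1..n}"
  define Y where "Y m = (1 / real m) *\<^sub>R mlog (\<Sum>i=1..n. mexp (real m *\<^sub>R X i))" for m :: nat
  obtain c d E F where sX: "spec (X j) c d E F" using spec_exists[OF sym[OF j]] by blast
  have key: "qf (X j) v \<le> qf (Y m) v \<and> sym_mat (Y m)" if m: "m \<ge> 1" for m v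
  proof -
    define M where "M = (\<Sum>i=1..n. mexp (real m *\<^sub>R X i))"
    have symM: "sym_mat M" unfolding M_def
      by (intro sym_sum mexp_pd(1) sym_scale sym)
    have geM: "qf (mexp (real m *\<^sub>R X j)) x \<le> qf M x" for x
    proof -
      have "qf M x = (\<Sum>i=1..n. qf (mexp (real m *\<^sub>R X i)) x)" unfolding M_def by (rule qf_sum)
      moreover have "qf (mexp (real m *\<^sub>R X j)) x \<le> (\<Sum>i=1..n. qf (mexp (real m *\<^sub>R X i)) x)"
        using j by (intro member_le_sum)
          (auto intro!: mexp_psd sym_scale sym)
      ultimately show ?thesis by simp
    qed
    have pdM: "qf M x > 0" if "x \<noteq> 0" for x
      using geM[of x] mexp_pd(2)[OF sym_scale[OF sym[OF j]] that, of "real m"] by linarith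
    obtain a0 b0 P Q where s0: "spec M a0 b0 P Q" using spec_exists[OF symM] by blast
    obtain a b where ab: "a > 0" "b > 0" and s: "spec M a b P Q"
      using spec_pos[OF s0 pdM] by blast
    have logM: "mlog M = ln a *\<^sub>R P + ln b *\<^sub>R Q" by (rule mlog_spec[OF s ab])
    have sXe: "spec (mexp (real m *\<^sub>R X j)) (exp (real m * c)) (exp (real m * d)) E F"
      by (rule spec_exp[OF spec_scale[OF sX]])
    have "qf (ln (exp (real m * c)) *\<^sub>R E + ln (exp (real m * d)) *\<^sub>R F) v
          \<le> qf (ln a *\<^sub>R P + ln b *\<^sub>R Q) v"
      by (rule log_mono[OF s sXe ab]) (auto intro: geM)
    moreover have "qf (ln (exp (real m * c)) *\<^sub>R E + ln (exp (real m * d)) *\<^sub>R F) v = real m * qf (X j) v"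
      using spec_qf(1)[OF sX, of v] by (simp add: qf_lin algebra_simps)
    ultimately have "real m * qf (X j) v \<le> qf (mlog M) v" using logM by simp
    moreover have "qf (Y m) v = qf (mlog M) v / real m" unfolding Y_def M_def[symmetric]
      by (simp add: qf_scale)
    ultimately have h: "real m * qf (X j) v \<le> real m * qf (Y m) v" using m by (simp add: field_simps)
    have "real m > 0" using m by simp
    with h have "qf (X j) v \<le> qf (Y m) v" by simp
    moreover have "sym_mat (Y m)" unfolding Y_def M_def[symmetric]
      using spec_sym[OF spec_comb[OF s, of "ln a" "ln b"]] logM by (simp add: sym_scale)
    ultimately show ?thesis by simp
  qed
  have limY: "Y \<longlonglongrightarrow> S" using lim unfolding Y_def .
  have limq: "(\<lambda>m. qf (Y m) v) \<longlonglongrightarrow> qf S v" for v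
    unfolding qf_expand by (intro tendsto_intros limY)
  have qle: "qf (X j) v \<le> qf S v" for v
    by (rule LIMSEQ_le_const[OF limq]) (use key in auto)
  have limc: "(\<lambda>m. Y m $ a $ b) \<longlonglongrightarrow> S $ a $ b" for a b
    by (intro tendsto_intros limY)
  have "S $ 1 $ 2 = S $ 2 $ 1"
  proof (rule LIMSEQ_unique[OF limc])
    have "\<forall>m\<ge>1. Y m $ 1 $ 2 = Y m $ 2 $ 1"
    proof (intro allI impI)
      fix m :: nat assume "m \<ge> 1"
      then have "transpose (Y m) $ 1 $ 2 = Y m $ 1 $ 2" using key[of m 0] by (simp add: sym_mat_def)
      then show "Y m $ 1 $ 2 = Y m $ 2 $ 1" by (simp add: tr_nth)
    qed
    then have "eventually (\<lambda>m. Y m $ 2 $ 1 = Y m $ 1 $ 2) sequentially"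
      unfolding eventually_sequentially by (metis (no_types))
    then show "(\<lambda>m. Y m $ 1 $ 2) \<longlonglongrightarrow> S $ 2 $ 1"
      by (rule Lim_transform_eventually[OF limc[of 2 1]])
  qed
  then have symS: "sym_mat S" unfolding sym_mat_def by (simp add: mat2_eq tr_nth)
  show "loewner_le (X j) S"
    unfolding loewner_le_def psd_def
  proof
    show "sym_mat (S - X j)" by (rule sym_diff[OF symS sym[OF j]])
    show "\<forall>v. 0 \<le> v \<bullet> ((S - X j) *v v)"
      using qle by (simp add: matrix_vector_mult_diff_rdistrib inner_diff_right qf_def)
  qed
qed

end
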